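(* Fix $R_{\rm eff}>0$ and suppose that all link SNRs $\gamma^{SR}_k,\gamma^{SD}_k,\gamma^{RD}_k$, $k=1,\dots,K$, are i.i.d. with a common cumulative distribution function $F$ supported on $[0,\infty)$, and let $\gamma,\gamma',\gamma''$ denote independent random variables with CDF $F$. Then: (i) for every $K\ge1$, $\bar J^{\text{no relay}}_K(R_{\rm eff})<\infty$ if and only if $\Phi_1:=\mathbb{E}[1/\gamma]<\infty$; (ii) for every $K\ge2$, if $\Phi_2:=\mathbb{E}[1/\max(\gamma',\gamma'')]<\infty$ then $\bar J_K(R_{\rm eff})<\infty$.
   Context: Notation: $I(x)=\log(1+x)$, $I^{-1}(x)=e^x-1$, $\tilde\gamma_k=\max(\gamma^{SD}_k,\gamma^{RD}_k)$. Relay problem with $K$ slots and message size $B=KR_{\rm eff}$ nats: in slot $k$ the link SNRs are $(\gamma^{SR}_k,\gamma^{SD}_k,\gamma^{RD}_k)$; a power $p_k\ge0$ is chosen causally (as a function of the SNRs of slots $1,\dots,k$). Remaining information: $b^R_1=b^D_1=B$; if $b^R_k>0$ (Phase 1, the source transmits) then $b^R_{k+1}=b^R_k-I(p_k\gamma^{SR}_k)$, $b^D_{k+1}=b^D_k-I(p_k\gamma^{SD}_k)$; if $b^R_k\le0$ (Phase 2, whichever of source/relay has the larger SNR to the destination transmits) then $b^R_{k+1}=b^R_k$, $b^D_{k+1}=b^D_k-I(p_k\tilde\gamma_k)$. The constraint is $b^D_{K+1}\le0$ a.s. The NMESE is $\bar J_K(R_{\rm eff})=\frac1K\mathbb{E}_{\boldsymbol\gamma_1}[J^\star(\boldsymbol\gamma_1)]$,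 where $J^\star(\boldsymbol\gamma_1)$ is the infimum over causal feasible policies of $\mathbb{E}[\sum_{k=1}^Kp_k\mid\boldsymbol\gamma_1]$. "No relaying" means the same problem with $\gamma^{SR}_k\equiv0$ (Phase 2 never occurs; constraint $\sum_kI(p_k\gamma^{SD}_k)\ge B$); its NMESE is $\bar J^{\text{no relay}}_K(R_{\rm eff})$. *)

theory Defs
  imports "HOL-Probability.Probability"
begin

type_synonym snr = "real \<times> real \<times> real"  (* (gamma_SR, gamma_SD, gamma_RD) of one slot *)

definition Icap :: "real \<Rightarrow> real" where
  "Icap x = ln (1 + x)"

definition step :: "real \<times> real \<Rightarrow> real \<Rightarrow> snr \<Rightarrow> real \<times> real" where
  "step b p s = (case b of (bR, bD) \<Rightarrow> (case s of (sr, sd, rd) \<Rightarrow>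
     if bR > 0 then (bR - Icap (p * sr), bD - Icap (p * sd))
     else (bR, bD - Icap (p * max sd rd))))"

(* bstate B P g k = (b^R_{k+1}, b^D_{k+1}); slots are indexed 1..K, power in slot k is P k g *)
primrec bstate :: "real \<Rightarrow> (nat \<Rightarrow> (nat \<Rightarrow> snr) \<Rightarrow> real) \<Rightarrow> (nat \<Rightarrow> snr) \<Rightarrow> nat \<Rightarrow> real \<times> real" where
  "bstate B P g 0 = (B, B)"
| "bstate B P g (Suc k) = step (bstate B P g k) (P (Suc k) g) (g (Suc k))"

(* conditional law of the slots 2..K (i.i.d. with per-slot law S) *)
abbreviation rest_law :: "snr measure \<Rightarrow> nat \<Rightarrow> (nat \<Rightarrow> snr) measure" where
  "rest_law S K \<equiv> PiM {2..K} (\<lambda>_. S)"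

(* causal, nonnegative, measurable policy meeting b^D_{K+1} <= 0 a.s., given first-slot SNRs x *)
definition feasible :: "snr measure \<Rightarrow> nat \<Rightarrow> real \<Rightarrow> snr \<Rightarrow> (nat \<Rightarrow> (nat \<Rightarrow> snr) \<Rightarrow> real) \<Rightarrow> bool" where
  "feasible S K B x P \<longleftrightarrow>
     (\<forall>k g g'. (\<forall>j\<in>{1..k}. g j = g' j) \<longrightarrow> P k g = P k g') \<and>
     (\<forall>k g. 0 \<le> P k g) \<and>
     (\<forall>k\<in>{1..K}. (\<lambda>g. P k (g(1 := x))) \<in> borel_measurable (rest_law S K)) \<and>
     (AE g in rest_law S K. snd (bstate B P (g(1 := x)) K) \<le> 0)"

(* J*(gamma_1): infimum over feasible causal policies of the conditional expected total power *)
definition Jstar :: "snr measure \<Rightarrow> nat \<Rightarrow> real \<Rightarrow> snr \<Rightarrow> ennreal" where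
  "Jstar S K B x = (INF P \<in> {P. feasible S K B x P}.
      \<integral>\<^sup>+ g. (\<Sum>k\<in>{1..K}. ennreal (P k (g(1 := x)))) \<partial>(rest_law S K))"

definition NMESE :: "snr measure \<Rightarrow> nat \<Rightarrow> real \<Rightarrow> ennreal" where
  "NMESE S K R = ennreal (1 / real K) * (\<integral>\<^sup>+ x. Jstar S K (real K * R) x \<partial>S)"

definition slot_law :: "real measure \<Rightarrow> snr measure" where
  "slot_law M = M \<Otimes>\<^sub>M (M \<Otimes>\<^sub>M M)"

(* no relaying: gamma_SR forced to 0 *)
definition slot_law_norelay :: "real measure \<Rightarrow> snr measure" where
  "slot_law_norelay M = distr (slot_law M) (slot_law M) (\<lambda>(a, b, c). (0, b, c))"

definition NMESE_relay :: "real measure \<Rightarrow> nat \<Rightarrow> real \<Rightarrow> ennreal" where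
  "NMESE_relay M K R = NMESE (slot_law M) K R"

definition NMESE_norelay :: "real measure \<Rightarrow> nat \<Rightarrow> real \<Rightarrow> ennreal" where
  "NMESE_norelay M K R = NMESE (slot_law_norelay M) K R"

(* Phi_1 = E[1/gamma], Phi_2 = E[1/max(gamma',gamma'')], with 1/0 = infinity *)
definition Phi1 :: "real measure \<Rightarrow> ennreal" where
  "Phi1 M = (\<integral>\<^sup>+ x. inverse (ennreal x) \<partial>M)"

definition Phi2 :: "real measure \<Rightarrow> ennreal" where
  "Phi2 M = (\<integral>\<^sup>+ z. inverse (ennreal (max (fst z) (snd z))) \<partial>(M \<Otimes>\<^sub>M M))"

end

theory Submission
  imports Defs
begin

lemma bstate_causal:
  assumes causal: "\<forall>k g g'. (\<forall>j\<in>{1..k}. g j = g' j) \<longrightarrow> P k g = P k g'"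
  shows "(\<forall>i\<in>{1..m}. g i = g' i) \<Longrightarrow> bstate B P g m = bstate B P g' m"
proof (induction m)
  case 0 then show ?case by simp
next
  case (Suc m)
  then have "bstate B P g m = bstate B P g' m" by auto
  moreover have "P (Suc m) g = P (Suc m) g'" using causal Suc.prems by blast
  moreover have "g (Suc m) = g' (Suc m)" using Suc.prems by auto
  ultimately show ?case by simp
qed

lemma sets_slot_law:
  assumes "sets M = sets borel"
  shows "sets (slot_law M) = sets (borel \<Otimes>\<^sub>M (borel \<Otimes>\<^sub>M (borel::real measure)))"
  unfolding slot_law_def
  by (intro sets_pair_measure_cong assms)

lemma sets_slot_law_norelay:
  assumes "sets M = sets borel"
  shows "sets (slot_law_norelay M) = sets (borel \<Otimes>\<^sub>M (borel \<Otimes>\<^sub>M (borel::real measure)))"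
  unfolding slot_law_norelay_def using sets_slot_law[OF assms] by simp

lemma coord_meas:
  assumes "k \<in> {1..K}" and "x \<in> space S"
  shows "(\<lambda>g. (g(1:=x)) k) \<in> measurable (rest_law S K) S"
proof (cases "k = 1")
  case True then show ?thesis using assms(2) by simp
next
  case False
  then have "(\<lambda>g. (g(1:=x)) k) = (\<lambda>g. g k)" by auto
  moreover have "k \<in> {2..K}" using assms False by auto
  ultimately show ?thesis by (simp add: measurable_component_singleton)
qed

lemma comp_meas:
  assumes "sets S = sets (borel \<Otimes>\<^sub>M (borel \<Otimes>\<^sub>M (borel::real measure)))"
    and "h \<in> borel_measurable (borel \<Otimes>\<^sub>M (borel \<Otimes>\<^sub>M (borel::real measure)))"
    and "k \<in> {1..K}"
  shows "(\<lambda>g. h ((g(1:=x)) k)) \<in> borel_measurable (rest_law S K)"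
proof -
  have "h \<in> borel_measurable S" using assms(2) measurable_cong_sets[OF assms(1) refl] by blast
  moreover have "x \<in> space S" using sets_eq_imp_space_eq[OF assms(1)] by (simp add: space_pair_measure)
  ultimately show ?thesis using measurable_comp[OF coord_meas[OF assms(3)], of x S h borel] by (auto simp: comp_def)
qed

lemma step_meas_aux:
  fixes a b p u v w :: "'a \<Rightarrow> real"
  assumes [measurable]: "a \<in> borel_measurable N" "b \<in> borel_measurable N" "p \<in> borel_measurable N"
    "u \<in> borel_measurable N" "v \<in> borel_measurable N" "w \<in> borel_measurable N"
  shows "(\<lambda>g. if 0 < a g then a g - ln (1 + p g * u g) else a g) \<in> borel_measurable N"
    "(\<lambda>g. if 0 < a g then b g - ln (1 + p g * v g) else b g - ln (1 + p g * max (v g) (w g))) \<in> borel_measurable N"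
  by measurable

lemma bstate_meas:
  assumes sS: "sets S = sets (borel \<Otimes>\<^sub>M (borel \<Otimes>\<^sub>M (borel::real measure)))"
    and Pm: "\<forall>k\<in>{1..K}. (\<lambda>g. P k (g(1 := x))) \<in> borel_measurable (rest_law S K)"
  shows "m \<le> K \<Longrightarrow> (\<lambda>g. fst (bstate B P (g(1:=x)) m)) \<in> borel_measurable (rest_law S K) \<and>
                   (\<lambda>g. snd (bstate B P (g(1:=x)) m)) \<in> borel_measurable (rest_law S K)"
proof (induction m)
  case 0 then show ?case by simp
next
  case (Suc m)
  have "m \<le> K" using Suc.prems by simp
  note IH = Suc.IH[OF this]
  from IH have f1: "(\<lambda>g. fst (bstate B P (g(1:=x)) m)) \<in> borel_measurable (rest_law S K)"
     and f2: "(\<lambda>g. snd (bstate B P (g(1:=x)) m)) \<in> borel_measurable (rest_law S K)" by blast+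
  have k: "Suc m \<in> {1..K}" using Suc.prems by auto
  have p: "(\<lambda>g. P (Suc m) (g(1 := x))) \<in> borel_measurable (rest_law S K)" using Pm k by blast
  have s1: "(\<lambda>g. fst ((g(1:=x)) (Suc m))) \<in> borel_measurable (rest_law S K)"
    by (rule comp_meas[OF sS _ k]) measurable
  have s2: "(\<lambda>g. fst (snd ((g(1:=x)) (Suc m)))) \<in> borel_measurable (rest_law S K)"
    by (rule comp_meas[OF sS _ k]) measurable
  have s3: "(\<lambda>g. snd (snd ((g(1:=x)) (Suc m)))) \<in> borel_measurable (rest_law S K)"
    by (rule comp_meas[OF sS _ k]) measurable
  have e1: "(\<lambda>g. fst (bstate B P (g(1:=x)) (Suc m))) = (\<lambda>g. 
      if fst (bstate B P (g(1:=x)) m) > 0 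
      then fst (bstate B P (g(1:=x)) m) - ln (1 + P (Suc m) (g(1 := x)) * fst ((g(1:=x)) (Suc m)))
      else fst (bstate B P (g(1:=x)) m))"
    by (auto simp: step_def Icap_def split: prod.splits)
  have e2: "(\<lambda>g. snd (bstate B P (g(1:=x)) (Suc m))) = (\<lambda>g. 
      if fst (bstate B P (g(1:=x)) m) > 0 
      then snd (bstate B P (g(1:=x)) m) - ln (1 + P (Suc m) (g(1 := x)) * fst (snd ((g(1:=x)) (Suc m))))
      else snd (bstate B P (g(1:=x)) m) - ln (1 + P (Suc m) (g(1 := x)) * 
           max (fst (snd ((g(1:=x)) (Suc m)))) (snd (snd ((g(1:=x)) (Suc m))))))"
    by (auto simp: step_def Icap_def split: prod.splits)
  show ?case unfolding e1 e2 using step_meas_aux[OF f1 f2 p s1 s2 s3] by blast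
qed

lemma distr_fst':
  assumes "prob_space A" "prob_space B"
  shows "distr (A \<Otimes>\<^sub>M B) A fst = A"
  by (rule prob_space.distr_pair_fst[OF assms(2)])

lemma distr_snd':
  assumes "prob_space A" "prob_space B"
  shows "distr (A \<Otimes>\<^sub>M B) B snd = B"
proof -
  interpret A: prob_space A by fact
  interpret B: prob_space B by fact
  interpret AB: pair_sigma_finite A B by standard
  have "A \<Otimes>\<^sub>M B = distr (B \<Otimes>\<^sub>M A) (A \<Otimes>\<^sub>M B) (\<lambda>(x, y). (y, x))"
    by (rule AB.distr_pair_swap)
  then have "distr (A \<Otimes>\<^sub>M B) B snd = distr (distr (B \<Otimes>\<^sub>M A) (A \<Otimes>\<^sub>M B) (\<lambda>(x, y). (y, x))) B snd"
    by (rule arg_cong)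
  also have "\<dots> = distr (B \<Otimes>\<^sub>M A) B (snd \<circ> (\<lambda>(x, y). (y, x)))"
    by (rule distr_distr) measurable
  also have "snd \<circ> (\<lambda>(x, y). (y, x)) = fst" by auto
  also have "distr (B \<Otimes>\<^sub>M A) B fst = B" using distr_fst'[OF assms(2,1)] .
  finally show ?thesis .
qed

lemma AE_fst':
  assumes "prob_space A" "prob_space B" "AE x in A. P x"
  shows "AE z in A \<Otimes>\<^sub>M B. P (fst z)"
proof (rule AE_distrD[of fst "A \<Otimes>\<^sub>M B" A P])
  show "fst \<in> measurable (A \<Otimes>\<^sub>M B) A" by measurable
  have "distr (A \<Otimes>\<^sub>M B) A fst = A" by (rule distr_fst'[OF assms(1,2)])
  then show "AE x in distr (A \<Otimes>\<^sub>M B) A fst. P x" using assms(3) by metis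
qed

lemma AE_snd':
  assumes "prob_space A" "prob_space B" "AE x in B. P x"
  shows "AE z in A \<Otimes>\<^sub>M B. P (snd z)"
proof (rule AE_distrD[of snd "A \<Otimes>\<^sub>M B" B P])
  show "snd \<in> measurable (A \<Otimes>\<^sub>M B) B" by measurable
  have "distr (A \<Otimes>\<^sub>M B) B snd = B" by (rule distr_snd'[OF assms(1,2)])
  then show "AE x in distr (A \<Otimes>\<^sub>M B) B snd. P x" using assms(3) by metis
qed

lemma int_fst':
  assumes "prob_space A" "prob_space B" "f \<in> borel_measurable A"
  shows "(\<integral>\<^sup>+ z. f (fst z) \<partial>(A \<Otimes>\<^sub>M B)) = (\<integral>\<^sup>+ x. f x \<partial>A)"
proof -
  have "(\<integral>\<^sup>+ x. f x \<partial>A) = (\<integral>\<^sup>+ x. f x \<partial>(distr (A \<Otimes>\<^sub>M B) A fst))"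
    by (simp add: distr_fst'[OF assms(1,2)])
  also have "\<dots> = (\<integral>\<^sup>+ z. f (fst z) \<partial>(A \<Otimes>\<^sub>M B))"
    by (rule nn_integral_distr) (auto simp: distr_fst'[OF assms(1,2)] assms(3))
  finally show ?thesis ..
qed

lemma int_snd':
  assumes "prob_space A" "prob_space B" "f \<in> borel_measurable B"
  shows "(\<integral>\<^sup>+ z. f (snd z) \<partial>(A \<Otimes>\<^sub>M B)) = (\<integral>\<^sup>+ x. f x \<partial>B)"
proof -
  have "(\<integral>\<^sup>+ x. f x \<partial>B) = (\<integral>\<^sup>+ x. f x \<partial>(distr (A \<Otimes>\<^sub>M B) B snd))"
    by (simp add: distr_snd'[OF assms(1,2)])
  also have "\<dots> = (\<integral>\<^sup>+ z. f (snd z) \<partial>(A \<Otimes>\<^sub>M B))"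
    by (rule nn_integral_distr) (auto simp: distr_snd'[OF assms(1,2)] assms(3))
  finally show ?thesis ..
qed

lemma int_fst_fstsnd:
  assumes "prob_space A" "prob_space B" "prob_space C" "f \<in> borel_measurable (A \<Otimes>\<^sub>M B)"
  shows "(\<integral>\<^sup>+ s. f (fst s, fst (snd s)) \<partial>(A \<Otimes>\<^sub>M (B \<Otimes>\<^sub>M C))) = (\<integral>\<^sup>+ z. f z \<partial>(A \<Otimes>\<^sub>M B))"
proof -
  interpret A: prob_space A by fact
  interpret B: prob_space B by fact
  interpret C: prob_space C by fact
  interpret BC: prob_space "B \<Otimes>\<^sub>M C" by (rule prob_space_pair) fact+
  have m1: "(\<lambda>s. f (fst s, fst (snd s))) \<in> borel_measurable (A \<Otimes>\<^sub>M (B \<Otimes>\<^sub>M C))"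
    using assms(4) by measurable
  have "(\<integral>\<^sup>+ s. f (fst s, fst (snd s)) \<partial>(A \<Otimes>\<^sub>M (B \<Otimes>\<^sub>M C))) =
        (\<integral>\<^sup>+ a. \<integral>\<^sup>+ bc. f (a, fst bc) \<partial>(B \<Otimes>\<^sub>M C) \<partial>A)"
    using BC.nn_integral_fst[OF m1] by simp
  also have "\<dots> = (\<integral>\<^sup>+ a. \<integral>\<^sup>+ b. f (a, b) \<partial>B \<partial>A)"
  proof (rule nn_integral_cong)
    fix a assume "a \<in> space A"
    then have "(\<lambda>b. f (a, b)) \<in> borel_measurable B" using assms(4) by measurable
    then show "(\<integral>\<^sup>+ bc. f (a, fst bc) \<partial>(B \<Otimes>\<^sub>M C)) = (\<integral>\<^sup>+ b. f (a, b) \<partial>B)"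
      using int_fst'[OF assms(2,3), of "\<lambda>b. f (a, b)"] by simp
  qed
  also have "\<dots> = (\<integral>\<^sup>+ z. f z \<partial>(A \<Otimes>\<^sub>M B))"
    using B.nn_integral_fst[OF assms(4)] by simp
  finally show ?thesis .
qed

lemma int_comp:
  assumes "\<And>i. prob_space (S::'b measure)" "k \<in> I" "f \<in> borel_measurable S"
  shows "(\<integral>\<^sup>+ g. f (g k) \<partial>(PiM I (\<lambda>_. S))) = (\<integral>\<^sup>+ s. f s \<partial>S)"
proof -
  have d: "distr (PiM I (\<lambda>_. S)) S (\<lambda>\<omega>. \<omega> k) = S"
    using distr_PiM_component[of I "\<lambda>_. S" k] assms by simp
  have "(\<integral>\<^sup>+ s. f s \<partial>S) = (\<integral>\<^sup>+ s. f s \<partial>(distr (PiM I (\<lambda>_. S)) S (\<lambda>\<omega>. \<omega> k)))"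
    by (simp add: d)
  also have "\<dots> = (\<integral>\<^sup>+ g. f (g k) \<partial>(PiM I (\<lambda>_. S)))"
    by (rule nn_integral_distr) (auto simp: d assms measurable_component_singleton)
  finally show ?thesis ..
qed

definition q1 :: "real \<Rightarrow> snr \<Rightarrow> real" where
  "q1 c s = (if 0 < max (fst s) (fst (snd s)) then c / max (fst s) (fst (snd s)) else 0)"

definition q2 :: "real \<Rightarrow> snr \<Rightarrow> real" where
  "q2 c s = (if 0 < max (fst (snd s)) (snd (snd s)) then c / max (fst (snd s)) (snd (snd s)) else 0)"

definition pol2 :: "real \<Rightarrow> nat \<Rightarrow> (nat \<Rightarrow> snr) \<Rightarrow> real" where
  "pol2 c k g = (if k = 1 then q1 c (g 1) else if k = 2 then q2 c (g 2) else 0)"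

lemma det2_1:
  assumes B: "B > 0" and c: "c = exp B - 1"
    and x: "0 \<le> fst x" "0 \<le> fst (snd x)" "0 < max (fst x) (fst (snd x))"
  shows "snd (step (B, B) (q1 c x) x) \<le> B \<and>
         (fst (step (B, B) (q1 c x) x) > 0 \<longrightarrow> snd (step (B, B) (q1 c x) x) \<le> 0)"
proof -
  have c0: "c > 0" using B c by simp
  have lnc: "ln (1 + c) = B" using c by simp
  obtain a b r where xe: "x = (a, b, r)" by (cases x) auto
  show ?thesis
  proof (cases "b \<le> a")
    case True
    then have a0: "a > 0" using x xe by auto
    have "q1 c x = c / a" using True a0 xe by (simp add: q1_def max_def)
    moreover have "ln (1 + c / a * b) \<ge> 0" using a0 x xe c0 by simp
    moreover have "c / a * a = c" using a0 by simp
    ultimately show ?thesis using B xe lnc by (simp add: step_def Icap_def)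
  next
    case False
    then have b0: "b > 0" using x xe by auto
    have "q1 c x = c / b" using False b0 xe by (simp add: q1_def max_def)
    moreover have "c / b * b = c" using b0 by simp
    ultimately show ?thesis using B xe lnc by (simp add: step_def Icap_def)
  qed
qed

lemma det2_2:
  assumes B: "B > 0" and c: "c = exp B - 1"
    and b1: "snd b \<le> B" "fst b > 0 \<longrightarrow> snd b \<le> 0"
    and y: "0 \<le> fst (snd y)" "0 \<le> snd (snd y)" "0 < max (fst (snd y)) (snd (snd y))"
  shows "snd (step b (q2 c y) y) \<le> 0"
proof -
  have c0: "c > 0" using B c by simp
  have lnc: "ln (1 + c) = B" using c by simp
  obtain a d where be: "b = (a, d)" by (cases b) auto
  obtain u v w where ye: "y = (u, v, w)" by (cases y) auto
  have m0: "max v w > 0" using y ye by simp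
  have q: "q2 c y = c / max v w" using m0 ye by (simp add: q2_def)
  show ?thesis
  proof (cases "a > 0")
    case True
    have "ln (1 + c / max v w * v) \<ge> 0" using m0 y ye c0 by simp
    then show ?thesis using True b1 be ye q by (simp add: step_def Icap_def)
  next
    case False
    have "c / max v w * max v w = c" using m0 by simp
    then show ?thesis using False b1 be ye q lnc by (simp add: step_def Icap_def)
  qed
qed

lemma det2:
  assumes B: "B > 0" and c: "c = exp B - 1"
    and x: "0 \<le> fst x" "0 \<le> fst (snd x)" "0 < max (fst x) (fst (snd x))"
    and y: "0 \<le> fst (snd y)" "0 \<le> snd (snd y)" "0 < max (fst (snd y)) (snd (snd y))"
    and G: "G 1 = x" "G 2 = y"
  shows "2 \<le> m \<Longrightarrow> snd (bstate B (pol2 c) G m) \<le> 0"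
proof (induction m rule: dec_induct)
  case base
  have "bstate B (pol2 c) G 1 = step (B, B) (q1 c x) x" using G by (simp add: pol2_def)
  then have "snd (bstate B (pol2 c) G 1) \<le> B \<and> (fst (bstate B (pol2 c) G 1) > 0 \<longrightarrow> snd (bstate B (pol2 c) G 1) \<le> 0)"
    using det2_1[OF B c x] by simp
  moreover have "bstate B (pol2 c) G 2 = step (bstate B (pol2 c) G 1) (q2 c y) y"
    using G by (simp add: pol2_def numeral_2_eq_2)
  ultimately show ?case using det2_2[OF B c _ _ y] by simp
next
  case (step m)
  then have "pol2 c (Suc m) G = 0" by (simp add: pol2_def)
  then show ?case using step by (auto simp: step_def Icap_def split: prod.splits)
qed

lemma ps_slot: "prob_space M \<Longrightarrow> prob_space (slot_law M)"
  unfolding slot_law_def by (intro prob_space_pair)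

lemma ps_nr:
  assumes "prob_space M" "sets M = sets (borel::real measure)"
  shows "prob_space (slot_law_norelay M)"
proof -
  have sp: "space M = UNIV" using sets_eq_imp_space_eq[OF assms(2)] by simp
  have "(\<lambda>(a::real, y::real\<times>real). (0::real, y)) \<in> measurable (M \<Otimes>\<^sub>M (M \<Otimes>\<^sub>M M)) (M \<Otimes>\<^sub>M (M \<Otimes>\<^sub>M M))"
    unfolding case_prod_beta by (intro measurable_Pair) (auto simp: sp)
  then show ?thesis unfolding slot_law_norelay_def slot_law_def
    by (intro prob_space.prob_space_distr prob_space_pair assms(1)) auto
qed

lemma ps_rest: "prob_space S \<Longrightarrow> prob_space (rest_law S K)"
  by (rule prob_space_PiM)

lemma meas3:
  assumes "sets S = sets (borel \<Otimes>\<^sub>M (borel \<Otimes>\<^sub>M (borel::real measure)))"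
    and "f \<in> borel_measurable (borel \<Otimes>\<^sub>M (borel \<Otimes>\<^sub>M (borel::real measure)))"
  shows "f \<in> borel_measurable S"
  using assms(2) measurable_cong_sets[OF assms(1) refl] by blast

lemma meas2:
  assumes "sets M = sets (borel::real measure)"
    and "f \<in> borel_measurable (borel \<Otimes>\<^sub>M (borel::real measure))"
  shows "f \<in> borel_measurable (M \<Otimes>\<^sub>M M)"
proof -
  have "sets (M \<Otimes>\<^sub>M M) = sets (borel \<Otimes>\<^sub>M (borel::real measure))"
    by (intro sets_pair_measure_cong assms)
  then show ?thesis using assms(2) measurable_cong_sets[OF _ refl] by blast
qed

lemma slot_AE_nonneg:
  assumes "prob_space M" "AE x in M. 0 \<le> x"
  shows "AE s in slot_law M. 0 \<le> fst s \<and> 0 \<le> fst (snd s) \<and> 0 \<le> snd (snd s)"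
proof -
  have pMM: "prob_space (M \<Otimes>\<^sub>M M)" using assms(1) by (intro prob_space_pair)
  have 1: "AE s in slot_law M. 0 \<le> fst s" unfolding slot_law_def
    by (rule AE_fst'[OF assms(1) pMM assms(2)])
  have "AE z in M \<Otimes>\<^sub>M M. 0 \<le> fst z" by (rule AE_fst'[OF assms(1) assms(1) assms(2)])
  then have 2: "AE s in slot_law M. 0 \<le> fst (snd s)" unfolding slot_law_def
    by (rule AE_snd'[OF assms(1) pMM, of "\<lambda>z. 0 \<le> fst z"])
  have "AE z in M \<Otimes>\<^sub>M M. 0 \<le> snd z" by (rule AE_snd'[OF assms(1) assms(1) assms(2)])
  then have 3: "AE s in slot_law M. 0 \<le> snd (snd s)" unfolding slot_law_def
    by (rule AE_snd'[OF assms(1) pMM, of "\<lambda>z. 0 \<le> snd z"])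
  show ?thesis using 1 2 3 by eventually_elim auto
qed

lemma ennreal_div_le:
  assumes "c > 0"
  shows "ennreal (if 0 < m then c / m else 0) \<le> ennreal c * inverse (ennreal m)"
proof (cases "0 < m")
  case True
  then have "ennreal (c / m) = ennreal c * inverse (ennreal m)"
    using assms by (simp add: inverse_ennreal ennreal_mult[symmetric] divide_inverse)
  then show ?thesis using True by simp
qed simp

lemma pol2_sum:
  assumes "K \<ge> 2"
  shows "(\<Sum>k\<in>{1..K}. ennreal (pol2 c k G)) = ennreal (q1 c (G 1)) + ennreal (q2 c (G 2))"
proof -
  have e: "{1..K} = insert 1 (insert 2 {3..K})" using assms by auto
  have "(\<Sum>k\<in>{3..K}. ennreal (pol2 c k G)) = 0" by (simp add: pol2_def)
  then show ?thesis unfolding e by (simp add: pol2_def)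
qed

lemma pol2_feasible:
  assumes pS: "prob_space S" and sS: "sets S = sets (borel \<Otimes>\<^sub>M (borel \<Otimes>\<^sub>M (borel::real measure)))"
    and B: "B > 0" and c: "c = exp B - 1" and K: "K \<ge> 2"
    and x: "0 \<le> fst x" "0 \<le> fst (snd x)" "0 < max (fst x) (fst (snd x))"
    and AEy: "AE y in S. 0 \<le> fst (snd y) \<and> 0 \<le> snd (snd y) \<and> 0 < max (fst (snd y)) (snd (snd y))"
  shows "feasible S K B x (pol2 c)"
  unfolding feasible_def
proof (intro conjI)
  have c0: "c > 0" using B c by simp
  show "\<forall>k g g'. (\<forall>j\<in>{1..k}. g j = g' j) \<longrightarrow> pol2 c k g = pol2 c k g'"
    by (auto simp: pol2_def)
  show "\<forall>k g. 0 \<le> pol2 c k g" using c0 by (auto simp: pol2_def q1_def q2_def)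
  show "\<forall>k\<in>{1..K}. (\<lambda>g. pol2 c k (g(1 := x))) \<in> borel_measurable (rest_law S K)"
  proof
    fix k assume k: "k \<in> {1..K}"
    define h where "h s = (if k = 1 then q1 c s else if k = 2 then q2 c s else 0)" for s
    have "h \<in> borel_measurable (borel \<Otimes>\<^sub>M (borel \<Otimes>\<^sub>M (borel::real measure)))"
      unfolding h_def q1_def q2_def by measurable
    then have "(\<lambda>g. h ((g(1:=x)) k)) \<in> borel_measurable (rest_law S K)"
      by (rule comp_meas[OF sS _ k])
    moreover have "(\<lambda>g. pol2 c k (g(1 := x))) = (\<lambda>g. h ((g(1:=x)) k))"
      by (auto simp: h_def pol2_def)
    ultimately show "(\<lambda>g. pol2 c k (g(1 := x))) \<in> borel_measurable (rest_law S K)" by simp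
  qed
  have "AE g in rest_law S K. 0 \<le> fst (snd (g 2)) \<and> 0 \<le> snd (snd (g 2)) \<and> 0 < max (fst (snd (g 2))) (snd (snd (g 2)))"
    using AE_PiM_component[of "{2..K}" "\<lambda>_. S" 2, OF pS _ AEy] K by simp
  then show "AE g in rest_law S K. snd (bstate B (pol2 c) (g(1 := x)) K) \<le> 0"
  proof (rule eventually_mono)
    fix g :: "nat \<Rightarrow> snr" assume "0 \<le> fst (snd (g 2)) \<and> 0 \<le> snd (snd (g 2)) \<and> 0 < max (fst (snd (g 2))) (snd (snd (g 2)))"
    then show "snd (bstate B (pol2 c) (g(1 := x)) K) \<le> 0"
      using det2[OF B c x, of "g 2" "g(1:=x)" K] K by auto
  qed
qed

lemma inv_max_meas:
  "(\<lambda>z::real\<times>real. inverse (ennreal (max (fst z) (snd z)))) \<in> borel_measurable (borel \<Otimes>\<^sub>M borel)"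
  by measurable

lemma part2:
  assumes pM: "prob_space M" and sM: "sets M = sets borel" and nn: "AE x in M. 0 \<le> x"
    and R: "R > 0" and K: "K \<ge> 2" and Phi: "Phi2 M < \<infinity>"
  shows "NMESE_relay M K R < \<infinity>"
proof -
  define S where "S = slot_law M"
  define B where "B = real K * R"
  define c where "c = exp B - 1"
  define f where "f z = inverse (ennreal (max (fst z) (snd z)))" for z :: "real \<times> real"
  have B0: "B > 0" using R K by (simp add: B_def)
  have c0: "c > 0" using B0 by (simp add: c_def)
  have pS: "prob_space S" unfolding S_def by (rule ps_slot[OF pM])
  interpret S: prob_space S by (rule pS)
  have sS: "sets S = sets (borel \<Otimes>\<^sub>M (borel \<Otimes>\<^sub>M (borel::real measure)))"
    unfolding S_def by (rule sets_slot_law[OF sM])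
  have pMM: "prob_space (M \<Otimes>\<^sub>M M)" using pM by (intro prob_space_pair)
  have fm: "f \<in> borel_measurable (M \<Otimes>\<^sub>M M)" unfolding f_def by (rule meas2[OF sM inv_max_meas])
  have Phi2e: "Phi2 M = (\<integral>\<^sup>+ z. f z \<partial>(M \<Otimes>\<^sub>M M))" by (simp add: Phi2_def f_def)
  have intH2: "(\<integral>\<^sup>+ s. f (snd s) \<partial>S) = Phi2 M"
    unfolding S_def slot_law_def Phi2e by (rule int_snd'[OF pM pMM fm])
  have intH1: "(\<integral>\<^sup>+ s. f (fst s, fst (snd s)) \<partial>S) = Phi2 M"
    unfolding S_def slot_law_def Phi2e by (rule int_fst_fstsnd[OF pM pM pM fm])
  have "AE z in M \<Otimes>\<^sub>M M. f z \<noteq> \<infinity>"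
    using nn_integral_PInf_AE[OF fm] Phi Phi2e by simp
  then have "AE s in S. f (snd s) \<noteq> \<infinity>" unfolding S_def slot_law_def
    by (rule AE_snd'[OF pM pMM, of "\<lambda>z. f z \<noteq> \<infinity>"])
  moreover have "AE s in S. 0 \<le> fst s \<and> 0 \<le> fst (snd s) \<and> 0 \<le> snd (snd s)"
    unfolding S_def by (rule slot_AE_nonneg[OF pM nn])
  ultimately have AEy: "AE y in S. 0 \<le> fst (snd y) \<and> 0 \<le> snd (snd y) \<and> 0 < max (fst (snd y)) (snd (snd y))"
  proof eventually_elim
    case (elim s)
    then show ?case by (cases "max (fst (snd s)) (snd (snd s)) \<le> 0") (auto simp: f_def ennreal_eq_0_iff)
  qed
  have q2m: "(\<lambda>s. ennreal (q2 c s)) \<in> borel_measurable S"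
    by (rule meas3[OF sS]) (unfold q2_def, measurable)
  have intq2: "(\<integral>\<^sup>+ s. ennreal (q2 c s) \<partial>S) \<le> ennreal c * Phi2 M"
  proof -
    have "(\<integral>\<^sup>+ s. ennreal (q2 c s) \<partial>S) \<le> (\<integral>\<^sup>+ s. ennreal c * f (snd s) \<partial>S)"
      by (rule nn_integral_mono) (unfold q2_def f_def, rule ennreal_div_le[OF c0])
    also have "\<dots> = ennreal c * (\<integral>\<^sup>+ s. f (snd s) \<partial>S)"
      by (rule nn_integral_cmult) (rule meas3[OF sS], unfold f_def, measurable)
    finally show ?thesis using intH2 by simp
  qed
  have Jb: "Jstar S K B x \<le> ennreal c * f (fst x, fst (snd x)) + ennreal c * Phi2 M"
    if x: "0 \<le> fst x" "0 \<le> fst (snd x)" for x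
  proof (cases "0 < max (fst x) (fst (snd x))")
    case False
    then have "f (fst x, fst (snd x)) = \<infinity>" by (simp add: f_def ennreal_eq_0_iff not_less)
    then show ?thesis using c0 by simp
  next
    case True
    have fe: "feasible S K B x (pol2 c)"
      by (rule pol2_feasible[OF pS sS B0 c_def K x True AEy])
    have "Jstar S K B x \<le> (\<integral>\<^sup>+ g. (\<Sum>k\<in>{1..K}. ennreal (pol2 c k (g(1 := x)))) \<partial>(rest_law S K))"
      unfolding Jstar_def using fe by (intro INF_lower) simp
    also have "\<dots> = (\<integral>\<^sup>+ g. ennreal (q1 c x) + ennreal (q2 c (g 2)) \<partial>(rest_law S K))"
      using pol2_sum[OF K] by simp
    also have "\<dots> = (\<integral>\<^sup>+ g. ennreal (q1 c x) \<partial>(rest_law S K)) + (\<integral>\<^sup>+ g. ennreal (q2 c (g 2)) \<partial>(rest_law S K))"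
    proof (rule nn_integral_add)
      show "(\<lambda>g. ennreal (q2 c (g 2))) \<in> borel_measurable (rest_law S K)"
        using measurable_comp[OF measurable_component_singleton[of 2 "{2..K}" "\<lambda>_. S"] q2m] K
        by (simp add: comp_def)
    qed simp
    also have "\<dots> = ennreal (q1 c x) + (\<integral>\<^sup>+ s. ennreal (q2 c s) \<partial>S)"
    proof -
      interpret RL: prob_space "rest_law S K" by (rule ps_rest[OF pS])
      show ?thesis using int_comp[of S 2 "{2..K}", OF pS _ q2m] K RL.emeasure_space_1 by simp
    qed
    also have "\<dots> \<le> ennreal c * f (fst x, fst (snd x)) + ennreal c * Phi2 M"
      using intq2 ennreal_div_le[OF c0, of "max (fst x) (fst (snd x))"]
      by (intro add_mono) (auto simp: q1_def f_def)
    finally show ?thesis .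
  qed
  have "(\<integral>\<^sup>+ x. Jstar S K B x \<partial>S) \<le> (\<integral>\<^sup>+ x. ennreal c * f (fst x, fst (snd x)) + ennreal c * Phi2 M \<partial>S)"
  proof (rule nn_integral_mono_AE)
    show "AE x in S. Jstar S K B x \<le> ennreal c * f (fst x, fst (snd x)) + ennreal c * Phi2 M"
      using slot_AE_nonneg[OF pM nn, folded S_def] by (rule eventually_mono) (intro Jb; simp)
  qed
  also have "\<dots> = ennreal c * Phi2 M + ennreal c * Phi2 M"
  proof -
    have m1: "(\<lambda>x. f (fst x, fst (snd x))) \<in> borel_measurable S"
      by (rule meas3[OF sS]) (unfold f_def, measurable)
    have "(\<integral>\<^sup>+ x. ennreal c * f (fst x, fst (snd x)) + ennreal c * Phi2 M \<partial>S) =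
          (\<integral>\<^sup>+ x. ennreal c * f (fst x, fst (snd x)) \<partial>S) + (\<integral>\<^sup>+ x. ennreal c * Phi2 M \<partial>S)"
      using m1 by (intro nn_integral_add) auto
    also have "\<dots> = ennreal c * Phi2 M + ennreal c * Phi2 M"
      using nn_integral_cmult[OF m1, of "ennreal c"] intH1 S.emeasure_space_1 by simp
    finally show ?thesis .
  qed
  also have "\<dots> < \<infinity>" using Phi by (simp add: ennreal_mult_less_top)
  finally have "(\<integral>\<^sup>+ x. Jstar S K B x \<partial>S) < \<infinity>" .
  then show ?thesis unfolding NMESE_relay_def NMESE_def S_def[symmetric] B_def[symmetric]
    by (simp add: ennreal_mult_less_top)
qed

lemma nr_map_meas:
  assumes "sets M = sets (borel::real measure)"
  shows "(\<lambda>(a::real, b::real, c::real). (0::real, b, c)) \<in> measurable (slot_law M) (slot_law M)"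
proof -
  have sp: "space M = UNIV" using sets_eq_imp_space_eq[OF assms] by simp
  have "(\<lambda>(a::real, y::real\<times>real). (0::real, y)) \<in> measurable (M \<Otimes>\<^sub>M (M \<Otimes>\<^sub>M M)) (M \<Otimes>\<^sub>M (M \<Otimes>\<^sub>M M))"
    unfolding case_prod_beta by (intro measurable_Pair) (auto simp: sp)
  moreover have "(\<lambda>(a::real, b::real, c::real). (0::real, b, c)) = (\<lambda>(a::real, y::real\<times>real). (0::real, y))"
    by auto
  ultimately show ?thesis unfolding slot_law_def by simp
qed

lemma nr_int:
  assumes sM: "sets M = sets (borel::real measure)" and h: "h \<in> borel_measurable (slot_law M)"
  shows "(\<integral>\<^sup>+ s. h s \<partial>slot_law_norelay M) = (\<integral>\<^sup>+ s. h (0, fst (snd s), snd (snd s)) \<partial>slot_law M)"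
  unfolding slot_law_norelay_def
  by (subst nn_integral_distr[OF nr_map_meas[OF sM]]) (auto simp: h split: prod.splits intro!: nn_integral_cong)

lemma nr_int_sd:
  assumes pM: "prob_space M" and sM: "sets M = sets (borel::real measure)" and H: "H \<in> borel_measurable M"
  shows "(\<integral>\<^sup>+ s. H (fst (snd s)) \<partial>slot_law_norelay M) = (\<integral>\<^sup>+ x. H x \<partial>M)"
proof -
  have pMM: "prob_space (M \<Otimes>\<^sub>M M)" using pM by (intro prob_space_pair)
  have Hb: "H \<in> borel_measurable borel" using H measurable_cong_sets[OF sM refl] by blast
  have "(\<lambda>s. H (fst (snd s))) \<in> borel_measurable (slot_law M)"
    by (rule meas3[OF sets_slot_law[OF sM]]) (use Hb in measurable)
  then have "(\<integral>\<^sup>+ s. H (fst (snd s)) \<partial>slot_law_norelay M) = (\<integral>\<^sup>+ s. H (fst (snd s)) \<partial>slot_law M)"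
    using nr_int[OF sM, of "\<lambda>s. H (fst (snd s))"] by simp
  also have "\<dots> = (\<integral>\<^sup>+ z. H (fst z) \<partial>(M \<Otimes>\<^sub>M M))"
    unfolding slot_law_def
    by (rule int_snd'[OF pM pMM, of "\<lambda>z. H (fst z)"]) (use H in measurable)
  also have "\<dots> = (\<integral>\<^sup>+ x. H x \<partial>M)" by (rule int_fst'[OF pM pM H])
  finally show ?thesis .
qed

lemma nr_AE:
  assumes pM: "prob_space M" and sM: "sets M = sets (borel::real measure)" and P: "AE x in M. 0 < x"
  shows "AE s in slot_law_norelay M. fst s = 0 \<and> 0 < fst (snd s)"
proof -
  have pMM: "prob_space (M \<Otimes>\<^sub>M M)" using pM by (intro prob_space_pair)
  have "AE z in M \<Otimes>\<^sub>M M. 0 < fst z" by (rule AE_fst'[OF pM pM P])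
  then have 1: "AE s in slot_law M. 0 < fst (snd s)" unfolding slot_law_def
    by (rule AE_snd'[OF pM pMM, of "\<lambda>z. 0 < fst z"])
  have m: "{s \<in> space (slot_law M). fst s = 0 \<and> 0 < fst (snd s)} \<in> sets (slot_law M)"
  proof -
    have "{s \<in> space ((borel::real measure) \<Otimes>\<^sub>M ((borel::real measure) \<Otimes>\<^sub>M (borel::real measure))). fst s = 0 \<and> 0 < fst (snd s)}
       \<in> sets ((borel::real measure) \<Otimes>\<^sub>M ((borel::real measure) \<Otimes>\<^sub>M (borel::real measure)))"
    proof -
      let ?N = "(borel::real measure) \<Otimes>\<^sub>M ((borel::real measure) \<Otimes>\<^sub>M (borel::real measure))"
      have f1: "(\<lambda>s::snr. fst s) \<in> borel_measurable ?N" by measurable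
      have f2: "(\<lambda>s::snr. fst (snd s)) \<in> borel_measurable ?N" by measurable
      have "{w \<in> space ?N. fst w = (\<lambda>_. 0::real) w} \<in> sets ?N"
        using borel_measurable_eq[OF f1, of "\<lambda>_. 0::real"] by simp
      moreover have "{w \<in> space ?N. (\<lambda>_. 0::real) w < fst (snd w)} \<in> sets ?N"
        using borel_measurable_less[OF _ f2, of "\<lambda>_. 0::real"] by simp
      ultimately have "{w \<in> space ?N. fst w = 0} \<inter> {w \<in> space ?N. 0 < fst (snd w)} \<in> sets ?N" by (rule sets.Int)
      moreover have "{w \<in> space ?N. fst w = 0} \<inter> {w \<in> space ?N. 0 < fst (snd w)} = {s \<in> space ?N. fst s = 0 \<and> 0 < fst (snd s)}" by auto
      ultimately show ?thesis by simp
    qed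
    moreover have "space (slot_law M) = space ((borel::real measure) \<Otimes>\<^sub>M ((borel::real measure) \<Otimes>\<^sub>M (borel::real measure)))"
      by (rule sets_eq_imp_space_eq[OF sets_slot_law[OF sM]])
    ultimately show ?thesis using sets_slot_law[OF sM] by simp
  qed
  show ?thesis unfolding slot_law_norelay_def
    by (subst AE_distr_iff[OF nr_map_meas[OF sM] m]) (use 1 in \<open>auto elim: eventually_mono\<close>)
qed

lemma nr_AE0:
  assumes pM: "prob_space M" and sM: "sets M = sets (borel::real measure)" and P: "AE x in M. 0 \<le> x"
  shows "AE s in slot_law_norelay M. fst s = 0 \<and> 0 \<le> fst (snd s)"
proof -
  have pMM: "prob_space (M \<Otimes>\<^sub>M M)" using pM by (intro prob_space_pair)
  have "AE z in M \<Otimes>\<^sub>M M. 0 \<le> fst z" by (rule AE_fst'[OF pM pM P])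
  then have 1: "AE s in slot_law M. 0 \<le> fst (snd s)" unfolding slot_law_def
    by (rule AE_snd'[OF pM pMM, of "\<lambda>z. 0 \<le> fst z"])
  have m: "{s \<in> space (slot_law M). fst s = 0 \<and> 0 \<le> fst (snd s)} \<in> sets (slot_law M)"
  proof -
    have "{s \<in> space ((borel::real measure) \<Otimes>\<^sub>M ((borel::real measure) \<Otimes>\<^sub>M (borel::real measure))). fst s = 0 \<and> 0 \<le> fst (snd s)}
       \<in> sets ((borel::real measure) \<Otimes>\<^sub>M ((borel::real measure) \<Otimes>\<^sub>M (borel::real measure)))"
    proof -
      let ?N = "(borel::real measure) \<Otimes>\<^sub>M ((borel::real measure) \<Otimes>\<^sub>M (borel::real measure))"
      have f1: "(\<lambda>s::snr. fst s) \<in> borel_measurable ?N" by measurable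
      have f2: "(\<lambda>s::snr. fst (snd s)) \<in> borel_measurable ?N" by measurable
      have "{w \<in> space ?N. fst w = (\<lambda>_. 0::real) w} \<in> sets ?N"
        using borel_measurable_eq[OF f1, of "\<lambda>_. 0::real"] by simp
      moreover have "{w \<in> space ?N. (\<lambda>_. 0::real) w \<le> fst (snd w)} \<in> sets ?N"
        using borel_measurable_le[OF _ f2, of "\<lambda>_. 0::real"] by simp
      ultimately have "{w \<in> space ?N. fst w = 0} \<inter> {w \<in> space ?N. 0 \<le> fst (snd w)} \<in> sets ?N" by (rule sets.Int)
      moreover have "{w \<in> space ?N. fst w = 0} \<inter> {w \<in> space ?N. 0 \<le> fst (snd w)} = {s \<in> space ?N. fst s = 0 \<and> 0 \<le> fst (snd s)}" by auto
      ultimately show ?thesis by simp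
    qed
    moreover have "space (slot_law M) = space ((borel::real measure) \<Otimes>\<^sub>M ((borel::real measure) \<Otimes>\<^sub>M (borel::real measure)))"
      by (rule sets_eq_imp_space_eq[OF sets_slot_law[OF sM]])
    ultimately show ?thesis using sets_slot_law[OF sM] by simp
  qed
  show ?thesis unfolding slot_law_norelay_def
    by (subst AE_distr_iff[OF nr_map_meas[OF sM] m]) (use 1 in \<open>auto elim: eventually_mono\<close>)
qed

definition qr :: "real \<Rightarrow> snr \<Rightarrow> real" where
  "qr c s = (if 0 < fst (snd s) then c / fst (snd s) else 0)"

definition pol1 :: "real \<Rightarrow> nat \<Rightarrow> (nat \<Rightarrow> snr) \<Rightarrow> real" where
  "pol1 c k g = (if k = 0 then 0 else qr c (g k))"

lemma det1:
  assumes B: "B > 0" and c: "c = exp R - 1"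
  shows "(\<forall>k\<in>{1..m}. fst (G k) = 0 \<and> 0 < fst (snd (G k))) \<Longrightarrow> bstate B (pol1 c) G m = (B, B - real m * R)"
proof (induction m)
  case 0 then show ?case by simp
next
  case (Suc m)
  then have IH: "bstate B (pol1 c) G m = (B, B - real m * R)" by auto
  have g: "fst (G (Suc m)) = 0" "0 < fst (snd (G (Suc m)))" using Suc.prems by auto
  obtain a b r where ge: "G (Suc m) = (a, b, r)" by (cases "G (Suc m)") auto
  have "pol1 c (Suc m) G = c / b" using g ge by (simp add: pol1_def qr_def)
  moreover have "c / b * b = c" using g ge by simp
  moreover have "ln (1 + c) = R" using c by simp
  ultimately show ?case using IH B g ge by (simp add: step_def Icap_def algebra_simps)
qed

lemma pol1_feasible:
  assumes pS: "prob_space S" and sS: "sets S = sets (borel \<Otimes>\<^sub>M (borel \<Otimes>\<^sub>M (borel::real measure)))"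
    and R: "R > 0" and c: "c = exp R - 1" and K: "K \<ge> 1"
    and x: "fst x = 0" "0 < fst (snd x)"
    and AEy: "AE y in S. fst y = 0 \<and> 0 < fst (snd y)"
  shows "feasible S K (real K * R) x (pol1 c)"
  unfolding feasible_def
proof (intro conjI)
  have c0: "c > 0" using R c by simp
  have B0: "real K * R > 0" using R K by simp
  show "\<forall>k g g'. (\<forall>j\<in>{1..k}. g j = g' j) \<longrightarrow> pol1 c k g = pol1 c k g'"
    by (auto simp: pol1_def)
  show "\<forall>k g. 0 \<le> pol1 c k g" using c0 by (auto simp: pol1_def qr_def)
  show "\<forall>k\<in>{1..K}. (\<lambda>g. pol1 c k (g(1 := x))) \<in> borel_measurable (rest_law S K)"
  proof
    fix k assume k: "k \<in> {1..K}"
    have "qr c \<in> borel_measurable (borel \<Otimes>\<^sub>M (borel \<Otimes>\<^sub>M (borel::real measure)))"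
      unfolding qr_def by measurable
    then have "(\<lambda>g. qr c ((g(1 := x)) k)) \<in> borel_measurable (rest_law S K)"
      by (rule comp_meas[OF sS _ k])
    moreover have "(\<lambda>g. pol1 c k (g(1 := x))) = (\<lambda>g. qr c ((g(1 := x)) k))"
      using k by (auto simp: pol1_def)
    ultimately show "(\<lambda>g. pol1 c k (g(1 := x))) \<in> borel_measurable (rest_law S K)" by simp
  qed
  have "AE g in rest_law S K. \<forall>k\<in>{2..K}. fst (g k) = 0 \<and> 0 < fst (snd (g k))"
  proof (rule AE_finite_allI)
    fix k assume "k \<in> {2..K}"
    then show "AE g in rest_law S K. fst (g k) = 0 \<and> 0 < fst (snd (g k))"
      using AE_PiM_component[of "{2..K}" "\<lambda>_. S" k, OF pS _ AEy] by simp
  qed simp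
  then show "AE g in rest_law S K. snd (bstate (real K * R) (pol1 c) (g(1 := x)) K) \<le> 0"
  proof (rule eventually_mono)
    fix g :: "nat \<Rightarrow> snr" assume "\<forall>k\<in>{2..K}. fst (g k) = 0 \<and> 0 < fst (snd (g k))"
    then have gd: "\<forall>k\<in>{1..K}. fst ((g(1:=x)) k) = 0 \<and> 0 < fst (snd ((g(1:=x)) k))"
      using x by auto
    have "bstate (real K * R) (pol1 c) (g(1 := x)) K = (real K * R, real K * R - real K * R)"
      by (rule det1[OF B0 c gd])
    then show "snd (bstate (real K * R) (pol1 c) (g(1 := x)) K) \<le> 0" by (simp del: fun_upd_apply)
  qed
qed

lemma inv_meas_M:
  assumes sM: "sets M = sets (borel::real measure)"
  shows "(\<lambda>x. inverse (ennreal x)) \<in> borel_measurable M"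
proof -
  have "(\<lambda>x::real. inverse (ennreal x)) \<in> borel_measurable borel" by measurable
  then show ?thesis using measurable_cong_sets[OF sM refl] by blast
qed

lemma Phi1_pos:
  assumes sM: "sets M = sets (borel::real measure)" and Phi: "Phi1 M < \<infinity>"
  shows "AE x in M. 0 < x"
proof -
  have m: "(\<lambda>x. inverse (ennreal x)) \<in> borel_measurable M"
    by (rule inv_meas_M[OF sM])
  have "AE x in M. inverse (ennreal x) \<noteq> \<infinity>"
    using nn_integral_PInf_AE[OF m] Phi by (simp add: Phi1_def)
  then show ?thesis by (rule eventually_mono) (auto simp: ennreal_eq_0_iff not_less[symmetric])
qed

lemma part1a:
  assumes pM: "prob_space M" and sM: "sets M = sets borel"
    and R: "R > 0" and K: "K \<ge> 1" and Phi: "Phi1 M < \<infinity>"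
  shows "NMESE_norelay M K R < \<infinity>"
proof -
  define S where "S = slot_law_norelay M"
  define c where "c = exp R - 1"
  define H where "H s = inverse (ennreal (fst (snd s)))" for s :: snr
  have c0: "c > 0" using R by (simp add: c_def)
  have pS: "prob_space S" unfolding S_def by (rule ps_nr[OF pM sM])
  interpret S: prob_space S by (rule pS)
  have sS: "sets S = sets (borel \<Otimes>\<^sub>M (borel \<Otimes>\<^sub>M (borel::real measure)))"
    unfolding S_def by (rule sets_slot_law_norelay[OF sM])
  have AEpos: "AE x in M. 0 < x" by (rule Phi1_pos[OF sM Phi])
  have AEy: "AE y in S. fst y = 0 \<and> 0 < fst (snd y)" unfolding S_def by (rule nr_AE[OF pM sM AEpos])
  have im: "(\<lambda>x. inverse (ennreal x)) \<in> borel_measurable M"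
    by (rule inv_meas_M[OF sM])
  have intH: "(\<integral>\<^sup>+ s. H s \<partial>S) = Phi1 M"
    unfolding S_def H_def Phi1_def by (rule nr_int_sd[OF pM sM im])
  have Hm: "H \<in> borel_measurable S" by (rule meas3[OF sS]) (unfold H_def, measurable)
  have qm: "(\<lambda>s. ennreal (qr c s)) \<in> borel_measurable S" by (rule meas3[OF sS]) (unfold qr_def, measurable)
  have qle: "ennreal (qr c s) \<le> ennreal c * H s" for s
    unfolding qr_def H_def by (rule ennreal_div_le[OF c0])
  have intq: "(\<integral>\<^sup>+ s. ennreal (qr c s) \<partial>S) \<le> ennreal c * Phi1 M"
  proof -
    have "(\<integral>\<^sup>+ s. ennreal (qr c s) \<partial>S) \<le> (\<integral>\<^sup>+ s. ennreal c * H s \<partial>S)"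
      by (rule nn_integral_mono) (rule qle)
    also have "\<dots> = ennreal c * Phi1 M" using nn_integral_cmult[OF Hm] intH by simp
    finally show ?thesis .
  qed
  have Jb: "Jstar S K (real K * R) x \<le> of_nat K * (ennreal c * H x + ennreal c * Phi1 M)"
    if x: "fst x = 0" "0 < fst (snd x)" for x
  proof -
    interpret RL: prob_space "rest_law S K" by (rule ps_rest[OF pS])
    have fe: "feasible S K (real K * R) x (pol1 c)"
      by (rule pol1_feasible[OF pS sS R c_def K x AEy])
    have "Jstar S K (real K * R) x \<le> (\<integral>\<^sup>+ g. (\<Sum>k\<in>{1..K}. ennreal (pol1 c k (g(1 := x)))) \<partial>(rest_law S K))"
      unfolding Jstar_def using fe by (intro INF_lower) simp
    also have "\<dots> = (\<Sum>k\<in>{1..K}. \<integral>\<^sup>+ g. ennreal (pol1 c k (g(1 := x))) \<partial>(rest_law S K))"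
    proof (rule nn_integral_sum)
      fix k assume k: "k \<in> {1..K}"
      have "(\<lambda>s. ennreal (qr c s)) \<in> borel_measurable (borel \<Otimes>\<^sub>M (borel \<Otimes>\<^sub>M (borel::real measure)))"
        unfolding qr_def by measurable
      then have "(\<lambda>g. ennreal (qr c ((g(1 := x)) k))) \<in> borel_measurable (rest_law S K)"
        by (rule comp_meas[OF sS _ k])
      moreover have "(\<lambda>g. ennreal (pol1 c k (g(1 := x)))) = (\<lambda>g. ennreal (qr c ((g(1 := x)) k)))"
        using k by (auto simp: pol1_def)
      ultimately show "(\<lambda>g. ennreal (pol1 c k (g(1 := x)))) \<in> borel_measurable (rest_law S K)" by simp
    qed
    also have "\<dots> \<le> of_nat (card {1..K}) * (ennreal c * H x + ennreal c * Phi1 M)"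
    proof (rule sum_bounded_above)
      fix k assume k: "k \<in> {1..K}"
      show "(\<integral>\<^sup>+ g. ennreal (pol1 c k (g(1 := x))) \<partial>(rest_law S K)) \<le> ennreal c * H x + ennreal c * Phi1 M"
      proof (cases "k = 1")
        case True
        then have "(\<integral>\<^sup>+ g. ennreal (pol1 c k (g(1 := x))) \<partial>(rest_law S K)) = ennreal (qr c x)"
          using RL.emeasure_space_1 by (simp add: pol1_def)
        also have "\<dots> \<le> ennreal c * H x" by (rule qle)
        finally show ?thesis by (rule order_trans) simp
      next
        case False
        then have k2: "k \<in> {2..K}" using k by auto
        have "(\<integral>\<^sup>+ g. ennreal (pol1 c k (g(1 := x))) \<partial>(rest_law S K)) = (\<integral>\<^sup>+ g. ennreal (qr c (g k)) \<partial>(rest_law S K))"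
          using False k by (intro nn_integral_cong) (simp add: pol1_def)
        also have "\<dots> = (\<integral>\<^sup>+ s. ennreal (qr c s) \<partial>S)" by (rule int_comp[OF pS k2 qm])
        also have "\<dots> \<le> ennreal c * Phi1 M" by (rule intq)
        finally show ?thesis by (rule order_trans) simp
      qed
    qed
    finally show ?thesis by simp
  qed
  have "(\<integral>\<^sup>+ x. Jstar S K (real K * R) x \<partial>S) \<le> (\<integral>\<^sup>+ x. of_nat K * (ennreal c * H x + ennreal c * Phi1 M) \<partial>S)"
  proof (rule nn_integral_mono_AE)
    show "AE x in S. Jstar S K (real K * R) x \<le> of_nat K * (ennreal c * H x + ennreal c * Phi1 M)"
      using AEy by (rule eventually_mono) (intro Jb; simp)
  qed
  also have "\<dots> = of_nat K * (ennreal c * Phi1 M + ennreal c * Phi1 M)"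
  proof -
    have "(\<integral>\<^sup>+ x. of_nat K * (ennreal c * H x + ennreal c * Phi1 M) \<partial>S) =
          of_nat K * (\<integral>\<^sup>+ x. ennreal c * H x + ennreal c * Phi1 M \<partial>S)"
      using Hm by (intro nn_integral_cmult) auto
    also have "(\<integral>\<^sup>+ x. ennreal c * H x + ennreal c * Phi1 M \<partial>S) =
          (\<integral>\<^sup>+ x. ennreal c * H x \<partial>S) + (\<integral>\<^sup>+ x. ennreal c * Phi1 M \<partial>S)"
      using Hm by (intro nn_integral_add) auto
    also have "\<dots> = ennreal c * Phi1 M + ennreal c * Phi1 M"
      using nn_integral_cmult[OF Hm, of "ennreal c"] intH S.emeasure_space_1 by simp
    finally show ?thesis .
  qed
  also have "\<dots> < \<infinity>" using Phi by (simp add: ennreal_mult_less_top of_nat_less_top)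
  finally have "(\<integral>\<^sup>+ x. Jstar S K (real K * R) x \<partial>S) < \<infinity>" .
  then show ?thesis unfolding NMESE_norelay_def NMESE_def S_def[symmetric]
    by (simp add: ennreal_mult_less_top)
qed

lemma pt_bound:
  fixes p d t :: real
  assumes p: "0 \<le> p" and d: "0 \<le> d" and t: "t - ln (1 + p * d) \<le> 0"
  shows "ennreal (exp t - 1) * inverse (ennreal d) \<le> ennreal p"
proof (cases "t \<le> 0")
  case True
  then have "exp t - 1 \<le> 0" by simp
  then have "ennreal (exp t - 1) = 0" by (simp add: ennreal_eq_0_iff)
  then show ?thesis by simp
next
  case False
  have pd: "0 \<le> p * d" using p d by simp
  have "t \<le> ln (1 + p * d)" using t by simp
  then have "exp t \<le> 1 + p * d" using pd by (simp add: ln_ge_iff)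
  then have e: "exp t - 1 \<le> p * d" by simp
  have et: "exp t - 1 > 0" using False by simp
  then have d0: "d > 0" using e d by (cases "d = 0") auto
  have "(exp t - 1) / d \<le> p" using e d0 by (simp add: divide_le_eq mult.commute)
  moreover have "ennreal (exp t - 1) * inverse (ennreal d) = ennreal ((exp t - 1) / d)"
    using d0 et by (simp add: inverse_ennreal ennreal_mult[symmetric] divide_inverse)
  ultimately show ?thesis by (simp add: ennreal_leI)
qed

lemma bR_const:
  assumes B: "B > 0"
  shows "(\<forall>k\<in>{1..m}. fst (G k) = 0) \<Longrightarrow> fst (bstate B P G m) = B"
proof (induction m)
  case 0 then show ?case by simp
next
  case (Suc m)
  then have IH: "fst (bstate B P G m) = B" by auto
  have g: "fst (G (Suc m)) = 0" using Suc.prems by auto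
  obtain a d where be: "bstate B P G m = (a, d)" by (cases "bstate B P G m") auto
  obtain u v w where ge: "G (Suc m) = (u, v, w)" by (cases "G (Suc m)") auto
  show ?case using IH B g be ge by (simp add: step_def Icap_def)
qed

lemma bD_step:
  assumes B: "B > 0" and g: "\<forall>k\<in>{1..Suc m}. fst (G k) = 0"
  shows "snd (bstate B P G (Suc m)) = snd (bstate B P G m) - ln (1 + P (Suc m) G * fst (snd (G (Suc m))))"
proof -
  have "fst (bstate B P G m) = B" using bR_const[OF B, of m G P] g by auto
  moreover obtain a d where be: "bstate B P G m = (a, d)" by (cases "bstate B P G m") auto
  moreover obtain u v w where ge: "G (Suc m) = (u, v, w)" by (cases "G (Suc m)") auto
  ultimately show ?thesis using B by (simp add: step_def Icap_def)
qed

lemma step_back: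
  assumes pS: "prob_space S" and sS: "sets S = sets (borel \<Otimes>\<^sub>M (borel \<Otimes>\<^sub>M (borel::real measure)))"
    and B0: "B > 0"
    and x: "fst x = 0" "0 \<le> fst (snd x)"
    and fe: "feasible S K B x P"
    and fin: "(\<integral>\<^sup>+ g. (\<Sum>k\<in>{1..K}. ennreal (P k (g(1 := x)))) \<partial>(rest_law S K)) < \<infinity>"
    and Psi: "(\<integral>\<^sup>+ s. inverse (ennreal (fst (snd s))) \<partial>S) = \<infinity>"
    and AEg: "AE g in rest_law S K. \<forall>k\<in>{2..K}. fst (g k) = 0 \<and> 0 \<le> fst (snd (g k))"
    and m: "1 \<le> m" "Suc m \<le> K"
    and AEj: "AE g in rest_law S K. snd (bstate B P (g(1 := x)) (Suc m)) \<le> 0"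
  shows "AE g in rest_law S K. snd (bstate B P (g(1 := x)) m) \<le> 0"
proof -
  define j where "j = Suc m"
  define I where "I = {2..K} - {j}"
  have jK: "j \<in> {2..K}" using m by (auto simp: j_def)
  have jI: "insert j I = {2..K}" "j \<notin> I" "finite I" using jK by (auto simp: I_def)
  define \<phi> where "\<phi> g = ennreal (exp (snd (bstate B P (g(1 := x)) m)) - 1)" for g :: "nat \<Rightarrow> snr"
  define \<psi> where "\<psi> s = inverse (ennreal (fst (snd s)))" for s :: snr
  have causal: "\<forall>k g g'. (\<forall>j\<in>{1..k}. g j = g' j) \<longrightarrow> P k g = P k g'"
    and nonneg: "\<forall>k g. 0 \<le> P k g"
    and Pm: "\<forall>k\<in>{1..K}. (\<lambda>g. P k (g(1 := x))) \<in> borel_measurable (rest_law S K)"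
    using fe unfolding feasible_def by blast+
  have Tm: "(\<lambda>g. snd (bstate B P (g(1 := x)) m)) \<in> borel_measurable (rest_law S K)"
    using bstate_meas[OF sS Pm, of m B] m by auto
  have \<phi>m: "\<phi> \<in> borel_measurable (rest_law S K)" unfolding \<phi>_def using Tm by measurable
  have \<psi>m: "\<psi> \<in> borel_measurable S" by (rule meas3[OF sS]) (unfold \<psi>_def, measurable)
  have \<psi>jm: "(\<lambda>g. \<psi> (g j)) \<in> borel_measurable (rest_law S K)"
    using measurable_comp[OF measurable_component_singleton[OF jK, of "\<lambda>_. S"] \<psi>m] by (simp add: comp_def)
  have \<phi>inv: "\<phi> (g(j := y)) = \<phi> g" for g y
  proof -
    have "bstate B P ((g(j := y))(1 := x)) m = bstate B P (g(1 := x)) m"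
      by (rule bstate_causal[OF causal]) (auto simp: j_def)
    then show ?thesis by (simp add: \<phi>_def)
  qed
  have pt: "AE g in rest_law S K. \<phi> g * \<psi> (g j) \<le> ennreal (P j (g(1 := x)))"
    using AEg AEj
  proof eventually_elim
    case (elim g)
    have good: "\<forall>k\<in>{1..Suc m}. fst ((g(1 := x)) k) = 0" using elim(1) x m by auto
    have gj: "(g(1 := x)) (Suc m) = g (Suc m)" using m by simp
    have sd: "0 \<le> fst (snd (g (Suc m)))" using elim(1) m by auto
    have e: "snd (bstate B P (g(1 := x)) (Suc m)) = snd (bstate B P (g(1 := x)) m) - ln (1 + P (Suc m) (g(1 := x)) * fst (snd ((g(1 := x)) (Suc m))))"
      by (rule bD_step[OF B0 good])
    have "snd (bstate B P (g(1 := x)) m) - ln (1 + P (Suc m) (g(1 := x)) * fst (snd (g (Suc m)))) \<le> 0"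
      using e elim(2) unfolding gj j_def by linarith
    from pt_bound[OF _ sd this] nonneg show ?case by (simp add: \<phi>_def \<psi>_def j_def)
  qed
  have "(\<integral>\<^sup>+ g. \<phi> g * \<psi> (g j) \<partial>(rest_law S K)) \<le> (\<integral>\<^sup>+ g. ennreal (P j (g(1 := x))) \<partial>(rest_law S K))"
    by (rule nn_integral_mono_AE[OF pt])
  also have "\<dots> \<le> (\<integral>\<^sup>+ g. (\<Sum>k\<in>{1..K}. ennreal (P k (g(1 := x)))) \<partial>(rest_law S K))"
    by (rule nn_integral_mono) (rule member_le_sum, use jK in auto)
  finally have Ffin: "(\<integral>\<^sup>+ g. \<phi> g * \<psi> (g j) \<partial>(rest_law S K)) < \<infinity>" using fin by simp
  interpret PS: product_prob_space "\<lambda>_::nat. S" by (rule product_prob_spaceI) (rule pS)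
  have eqR: "rest_law S K = PiM (insert j I) (\<lambda>_. S)" using jI(1) by simp
  have sp: "space S = UNIV" using sets_eq_imp_space_eq[OF sS] by (simp add: space_pair_measure)
  have upd: "(\<lambda>g. g(j := undefined)) \<in> measurable (PiM I (\<lambda>_. S)) (PiM (insert j I) (\<lambda>_. S))"
  proof -
    have "(\<lambda>g. (g, undefined)) \<in> measurable (PiM I (\<lambda>_. S)) (PiM I (\<lambda>_. S) \<Otimes>\<^sub>M S)"
      by (intro measurable_Pair) (auto simp: sp)
    from measurable_comp[OF this measurable_add_dim[of j I "\<lambda>_. S"]] show ?thesis by (simp add: comp_def)
  qed
  have \<phi>I: "\<phi> \<in> borel_measurable (PiM I (\<lambda>_. S))"
  proof -
    have "(\<lambda>g. \<phi> (g(j := undefined))) \<in> borel_measurable (PiM I (\<lambda>_. S))"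
      using measurable_comp[OF upd \<phi>m[unfolded eqR]] by (simp add: comp_def)
    then show ?thesis by (simp add: \<phi>inv)
  qed
  have "(\<integral>\<^sup>+ g. \<phi> g * \<psi> (g j) \<partial>(rest_law S K)) = (\<integral>\<^sup>+ g. (\<integral>\<^sup>+ y. \<phi> ((g(j := y))) * \<psi> ((g(j := y)) j) \<partial>S) \<partial>(PiM I (\<lambda>_. S)))"
    unfolding eqR by (rule PS.product_nn_integral_insert[OF jI(3) jI(2)]) (use \<phi>m \<psi>jm in \<open>simp add: eqR\<close>)
  also have "\<dots> = (\<integral>\<^sup>+ g. \<phi> g * \<infinity> \<partial>(PiM I (\<lambda>_. S)))"
  proof -
    have "\<psi> = (\<lambda>s. inverse (ennreal (fst (snd s))))" by (rule ext) (simp add: \<psi>_def)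
    then have Psi': "integral\<^sup>N S \<psi> = \<infinity>" using Psi by simp
    show ?thesis using nn_integral_cmult[OF \<psi>m] Psi' by (simp add: \<phi>inv)
  qed
  finally have F2: "(\<integral>\<^sup>+ g. \<phi> g * \<infinity> \<partial>(PiM I (\<lambda>_. S))) < \<infinity>" using Ffin by simp
  have I0: "(\<integral>\<^sup>+ g. \<phi> g \<partial>(PiM I (\<lambda>_. S))) = 0"
  proof (rule ccontr)
    assume "(\<integral>\<^sup>+ g. \<phi> g \<partial>(PiM I (\<lambda>_. S))) \<noteq> 0"
    then have "(\<integral>\<^sup>+ g. \<phi> g * \<infinity> \<partial>(PiM I (\<lambda>_. S))) = \<infinity>"
      using nn_integral_multc[OF \<phi>I, of \<infinity>] by simp
    then show False using F2 by simp
  qed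
  have "(\<integral>\<^sup>+ g. \<phi> g \<partial>(rest_law S K)) = (\<integral>\<^sup>+ g. (\<integral>\<^sup>+ y. \<phi> ((g(j := y))) \<partial>S) \<partial>(PiM I (\<lambda>_. S)))"
    unfolding eqR by (rule PS.product_nn_integral_insert[OF jI(3) jI(2)]) (use \<phi>m in \<open>simp add: eqR\<close>)
  also have "\<dots> = (\<integral>\<^sup>+ g. \<phi> g \<partial>(PiM I (\<lambda>_. S)))"
    using PS.M.emeasure_space_1 by (simp add: \<phi>inv)
  finally have "(\<integral>\<^sup>+ g. \<phi> g \<partial>(rest_law S K)) = 0" using I0 by simp
  then have "AE g in rest_law S K. \<phi> g = 0" using nn_integral_0_iff_AE[OF \<phi>m] by simp
  then show ?thesis by (rule eventually_mono) (simp add: \<phi>_def ennreal_eq_0_iff)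
qed

lemma cost_lower:
  assumes pS: "prob_space S" and sS: "sets S = sets (borel \<Otimes>\<^sub>M (borel \<Otimes>\<^sub>M (borel::real measure)))"
    and B0: "B > 0" and K: "K \<ge> 1"
    and x: "fst x = 0" "0 \<le> fst (snd x)"
    and fe: "feasible S K B x P"
    and Psi: "(\<integral>\<^sup>+ s. inverse (ennreal (fst (snd s))) \<partial>S) = \<infinity>"
    and AEy: "AE y in S. fst y = 0 \<and> 0 \<le> fst (snd y)"
  shows "ennreal (exp B - 1) * inverse (ennreal (fst (snd x))) \<le>
         (\<integral>\<^sup>+ g. (\<Sum>k\<in>{1..K}. ennreal (P k (g(1 := x)))) \<partial>(rest_law S K))"
    (is "_ \<le> ?cost")
proof (cases "?cost < \<infinity>")
  case False
  then show ?thesis by (simp add: not_less top_unique)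
next
  case fin: True
  interpret RL: prob_space "rest_law S K" by (rule ps_rest[OF pS])
  have causal: "\<forall>k g g'. (\<forall>j\<in>{1..k}. g j = g' j) \<longrightarrow> P k g = P k g'"
    and nonneg: "\<forall>k g. 0 \<le> P k g"
    and AEK: "AE g in rest_law S K. snd (bstate B P (g(1 := x)) K) \<le> 0"
    using fe unfolding feasible_def by blast+
  have AEg: "AE g in rest_law S K. \<forall>k\<in>{2..K}. fst (g k) = 0 \<and> 0 \<le> fst (snd (g k))"
  proof (rule AE_finite_allI)
    fix k assume "k \<in> {2..K}"
    then show "AE g in rest_law S K. fst (g k) = 0 \<and> 0 \<le> fst (snd (g k))"
      using AE_PiM_component[of "{2..K}" "\<lambda>_. S" k, OF pS _ AEy] by simp
  qed simp
  have ind: "n \<le> K - 1 \<Longrightarrow> AE g in rest_law S K. snd (bstate B P (g(1 := x)) (K - n)) \<le> 0" for n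
  proof (induction n)
    case 0 then show ?case using AEK by (simp only: diff_zero)
  next
    case (Suc n)
    have nn: "n \<le> K - 1" using Suc.prems by simp
    have eqn: "K - n = Suc (K - Suc n)" using Suc.prems by simp
    have IH: "AE g in rest_law S K. snd (bstate B P (g(1 := x)) (Suc (K - Suc n))) \<le> 0"
      using Suc.IH[OF nn] unfolding eqn .
    show ?case
      by (rule step_back[OF pS sS B0 x fe fin Psi AEg _ _ IH]) (use Suc.prems in auto)
  qed
  have "AE g in rest_law S K. snd (bstate B P (g(1 := x)) 1) \<le> 0"
    using ind[of "K - 1"] K by simp
  moreover have "bstate B P (g(1 := x)) 1 = step (B, B) (P 1 (\<lambda>_. x)) x" for g :: "nat \<Rightarrow> snr"
  proof -
    have "P 1 (g(1 := x)) = P 1 (\<lambda>_. x)" using causal by auto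
    then show ?thesis by simp
  qed
  ultimately have "snd (step (B, B) (P 1 (\<lambda>_. x)) x) \<le> 0" by simp
  moreover obtain u v w where xe: "x = (u, v, w)" by (cases x) auto
  ultimately have t1: "B - ln (1 + P 1 (\<lambda>_. x) * fst (snd x)) \<le> 0"
    using B0 x by (simp add: step_def Icap_def)
  have "ennreal (exp B - 1) * inverse (ennreal (fst (snd x))) \<le> ennreal (P 1 (\<lambda>_. x))"
    using pt_bound[OF _ x(2) t1] nonneg by auto
  also have "\<dots> = (\<integral>\<^sup>+ g. ennreal (P 1 (g(1 := x))) \<partial>(rest_law S K))"
  proof -
    have "\<And>g. P 1 (g(1 := x)) = P 1 (\<lambda>_. x)" using causal by auto
    then show ?thesis using RL.emeasure_space_1 by simp
  qed
  also have "\<dots> \<le> ?cost"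
    by (rule nn_integral_mono) (rule member_le_sum, use K in auto)
  finally show ?thesis .
qed

lemma part1b:
  assumes pM: "prob_space M" and sM: "sets M = sets borel" and nn: "AE x in M. 0 \<le> x"
    and R: "R > 0" and K: "K \<ge> 1" and Phi: "Phi1 M = \<infinity>"
  shows "NMESE_norelay M K R = \<infinity>"
proof -
  define S where "S = slot_law_norelay M"
  define B where "B = real K * R"
  define C where "C = exp B - 1"
  have B0: "B > 0" using R K by (simp add: B_def)
  have C0: "C > 0" using B0 by (simp add: C_def)
  have pS: "prob_space S" unfolding S_def by (rule ps_nr[OF pM sM])
  have sS: "sets S = sets (borel \<Otimes>\<^sub>M (borel \<Otimes>\<^sub>M (borel::real measure)))"
    unfolding S_def by (rule sets_slot_law_norelay[OF sM])
  have AEy: "AE y in S. fst y = 0 \<and> 0 \<le> fst (snd y)" unfolding S_def by (rule nr_AE0[OF pM sM nn])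
  have Psi: "(\<integral>\<^sup>+ s. inverse (ennreal (fst (snd s))) \<partial>S) = \<infinity>"
    unfolding S_def using nr_int_sd[OF pM sM inv_meas_M[OF sM]] Phi by (simp add: Phi1_def)
  have Hm: "(\<lambda>s. inverse (ennreal (fst (snd s)))) \<in> borel_measurable S" by (rule meas3[OF sS]) measurable
  have Jb: "ennreal C * inverse (ennreal (fst (snd x))) \<le> Jstar S K B x"
    if x: "fst x = 0" "0 \<le> fst (snd x)" for x
    unfolding Jstar_def
  proof (rule INF_greatest)
    fix P assume "P \<in> {P. feasible S K B x P}"
    then have fe: "feasible S K B x P" by simp
    show "ennreal C * inverse (ennreal (fst (snd x))) \<le> (\<integral>\<^sup>+ g. (\<Sum>k\<in>{1..K}. ennreal (P k (g(1 := x)))) \<partial>(rest_law S K))"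
      unfolding C_def by (rule cost_lower[OF pS sS B0 K x fe Psi AEy])
  qed
  have "\<infinity> = ennreal C * (\<integral>\<^sup>+ s. inverse (ennreal (fst (snd s))) \<partial>S)" using Psi C0 by simp
  also have "\<dots> = (\<integral>\<^sup>+ s. ennreal C * inverse (ennreal (fst (snd s))) \<partial>S)"
    by (rule nn_integral_cmult[OF Hm, symmetric])
  also have "\<dots> \<le> (\<integral>\<^sup>+ x. Jstar S K B x \<partial>S)"
    by (rule nn_integral_mono_AE) (use AEy in \<open>rule eventually_mono; intro Jb; simp\<close>)
  finally have "(\<integral>\<^sup>+ x. Jstar S K B x \<partial>S) = \<infinity>" by (simp add: top_unique)
  moreover have "ennreal (1 / real K) \<noteq> 0" using K by (simp add: ennreal_eq_0_iff)
  ultimately show ?thesis unfolding NMESE_norelay_def NMESE_def S_def[symmetric] B_def[symmetric]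
    by simp
qed

theorem theorem4:
  fixes M :: "real measure" and R :: real
  assumes "prob_space M" and "sets M = sets borel" and "AE x in M. 0 \<le> x"
    and "R > 0"
  shows "(\<forall>K::nat. K \<ge> 1 \<longrightarrow> (NMESE_norelay M K R < \<infinity> \<longleftrightarrow> Phi1 M < \<infinity>)) \<and>
         (\<forall>K::nat. K \<ge> 2 \<longrightarrow> Phi2 M < \<infinity> \<longrightarrow> NMESE_relay M K R < \<infinity>)"
proof (intro conjI allI impI)
  fix K :: nat assume K: "K \<ge> 1"
  show "NMESE_norelay M K R < \<infinity> \<longleftrightarrow> Phi1 M < \<infinity>"
  proof
    assume "NMESE_norelay M K R < \<infinity>"
    show "Phi1 M < \<infinity>"
    proof (rule ccontr)
      assume "\<not> Phi1 M < \<infinity>"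
      then have "Phi1 M = \<infinity>" by (metis infinity_ennreal_def top.not_eq_extremum)
      then have "NMESE_norelay M K R = \<infinity>" by (rule part1b[OF assms K])
      with \<open>NMESE_norelay M K R < \<infinity>\<close> show False by simp
    qed
  next
    assume "Phi1 M < \<infinity>"
    then show "NMESE_norelay M K R < \<infinity>" by (rule part1a[OF assms(1,2,4) K])
  qed
next
  fix K :: nat assume "K \<ge> 2" "Phi2 M < \<infinity>"
  then show "NMESE_relay M K R < \<infinity>" by (rule part2[OF assms])
qed

end
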